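(* Let $I=[r,s]$ be an interval of rounds with $s\ge r$ and let $C$ be an $I$-vertex-stable strongly connected component with $|C|\ge 2$. If $s\ge r+|C|-2$, then $D(C)\le |C|-1$.
   Context: A finite set $\Pi$ of $n\ge2$ processes is given together with an infinite sequence of simple directed graphs $\mathcal{G}^1,\mathcal{G}^2,\dots$ on vertex set $\Pi$ ($\mathcal{G}^t$ is the round-$t$ communication graph). Process $p$ causally influences $q$ in round $t$ if $q=p$ or $(p\to q)\in\mathcal{G}^t$. A causal chain of length $k\ge1$ from $p$ in round $t$ to $q$ is a sequence $p=p_0,\dots,p_k=q$ with $p_i$ causally influencing $p_{i+1}$ in round $t+i$ for $0\le i<k$; the causal distance $d_t(p,q)$ is the minimum length of such a chain ($\infty$ if none). For an interval $I=[r,s]$, a set $C\subseteq\Pi$ is an $I$-vertex-stable strongly connected component if for every $p\in C$ and every round $t\in I$, the vertex set of the strongly connected component of $\mathcal{G}^t$ containing $p$ equals $C$ (the edges may change). Its round-$x$ causal diameter is $D^x(C)=\max_{p,q\in C} d_x(p,q)$, and its causal diameter is $D(C)=\max\{D^x(C): x\in[r,s],\ x+D^x(C)-1\le s\}$ if this set is nonempty, and $D(C)=\infty$ otherwise. *)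

theory Defs
  imports Main "HOL-Library.Extended_Nat"
begin

text \<open>A run is given by a sequence of communication graphs G t (for rounds t \<ge> 1)
  on the finite process type 'p; an edge (p,q) \<in> G t means p \<rightarrow> q in round t.\<close>

definition influences :: "(nat \<Rightarrow> ('p \<times> 'p) set) \<Rightarrow> nat \<Rightarrow> 'p \<Rightarrow> 'p \<Rightarrow> bool" where
  "influences G t p q \<longleftrightarrow> q = p \<or> (p, q) \<in> G t"

definition causal_chain :: "(nat \<Rightarrow> ('p \<times> 'p) set) \<Rightarrow> nat \<Rightarrow> 'p \<Rightarrow> 'p \<Rightarrow> nat \<Rightarrow> bool" where
  "causal_chain G t p q k \<longleftrightarrow> k \<ge> 1 \<and>
     (\<exists>f :: nat \<Rightarrow> 'p. f 0 = p \<and> f k = q \<and> (\<forall>i<k. influences G (t + i) (f i) (f (Suc i))))"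

definition causal_dist :: "(nat \<Rightarrow> ('p \<times> 'p) set) \<Rightarrow> nat \<Rightarrow> 'p \<Rightarrow> 'p \<Rightarrow> enat" where
  "causal_dist G t p q =
     (if \<exists>k. causal_chain G t p q k then enat (LEAST k. causal_chain G t p q k) else \<infinity>)"

definition scc_of :: "('p \<times> 'p) set \<Rightarrow> 'p \<Rightarrow> 'p set" where
  "scc_of E p = {q. (p, q) \<in> E\<^sup>* \<and> (q, p) \<in> E\<^sup>*}"

definition vertex_stable_scc :: "(nat \<Rightarrow> ('p \<times> 'p) set) \<Rightarrow> nat \<Rightarrow> nat \<Rightarrow> 'p set \<Rightarrow> bool" where
  "vertex_stable_scc G r s C \<longleftrightarrow> (\<forall>p\<in>C. \<forall>t\<in>{r..s}. scc_of (G t) p = C)"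

definition causal_diam_at :: "(nat \<Rightarrow> ('p \<times> 'p) set) \<Rightarrow> nat \<Rightarrow> 'p set \<Rightarrow> enat" where
  "causal_diam_at G x C = Max {causal_dist G x p q | p q. p \<in> C \<and> q \<in> C}"

text \<open>Causal diameter D(C) w.r.t. interval [r,s]; the condition x + D^x(C) - 1 \<le> s
  is written x + D^x(C) \<le> s + 1 (equivalent, avoiding truncated subtraction).\<close>
definition causal_diam :: "(nat \<Rightarrow> ('p \<times> 'p) set) \<Rightarrow> nat \<Rightarrow> nat \<Rightarrow> 'p set \<Rightarrow> enat" where
  "causal_diam G r s C =
     (let S = {causal_diam_at G x C | x. x \<in> {r..s} \<and> enat x + causal_diam_at G x C \<le> enat s + 1}
      in if S \<noteq> {} then Max S else \<infinity>)"

end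

theory Submission
  imports Defs
begin

definition reach :: "(nat \<Rightarrow> ('p \<times> 'p) set) \<Rightarrow> nat \<Rightarrow> 'p \<Rightarrow> nat \<Rightarrow> 'p set" where
  "reach G t p k = {q. \<exists>f :: nat \<Rightarrow> 'p. f 0 = p \<and> f k = q \<and> (\<forall>i<k. influences G (t + i) (f i) (f (Suc i)))}"

lemma reach0: "reach G t p 0 = {p}"
  unfolding reach_def by auto

lemma reach_ext:
  assumes "q \<in> reach G t p k" "influences G (t + k) q q'"
  shows "q' \<in> reach G t p (Suc k)"
proof -
  obtain f where f: "f 0 = p" "f k = q" "\<forall>i<k. influences G (t + i) (f i) (f (Suc i))"
    using assms(1) unfolding reach_def by auto
  let ?g = "f(Suc k := q')"
  have "?g 0 = p" "?g (Suc k) = q'" using f by auto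
  moreover have "\<forall>i<Suc k. influences G (t + i) (?g i) (?g (Suc i))"
  proof (intro allI impI)
    fix i assume "i < Suc k"
    show "influences G (t + i) (?g i) (?g (Suc i))"
    proof (cases "i = k")
      case True then show ?thesis using f(2) assms(2) by simp
    next
      case False then have "i < k" using \<open>i < Suc k\<close> by simp
      then show ?thesis using f(3) by simp
    qed
  qed
  ultimately show ?thesis unfolding reach_def by blast
qed

lemma reach_mono: "reach G t p k \<subseteq> reach G t p (Suc k)"
  using reach_ext[of _ G t p k] by (auto simp: influences_def)

lemma edge_out:
  assumes "(a, b) \<in> E\<^sup>*" "a \<in> R" "b \<notin> R"
  shows "\<exists>u v. (u, v) \<in> E \<and> u \<in> R \<and> v \<notin> R \<and> (a, u) \<in> E\<^sup>* \<and> (v, b) \<in> E\<^sup>*"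
  using assms
proof (induction rule: rtrancl_induct)
  case base then show ?case by simp
next
  case (step y z)
  show ?case
  proof (cases "y \<in> R")
    case True then show ?thesis using step by blast
  next
    case False
    then obtain u v where "(u, v) \<in> E" "u \<in> R" "v \<notin> R" "(a, u) \<in> E\<^sup>*" "(v, y) \<in> E\<^sup>*"
      using step by blast
    then show ?thesis using step(2) by (meson rtrancl.rtrancl_into_rtrancl)
  qed
qed

lemma grow:
  fixes G :: "nat \<Rightarrow> ('p::finite \<times> 'p) set"
  assumes vs: "vertex_stable_scc G r s C" and pC: "p \<in> C"
  shows "(\<forall>i<k. t + i \<in> {r..s}) \<Longrightarrow> min (card C) (k + 1) \<le> card (reach G t p k \<inter> C)"
proof (induction k)
  case 0 then show ?case using pC by (simp add: reach0)
next
  case (Suc k)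
  have IH: "min (card C) (k + 1) \<le> card (reach G t p k \<inter> C)" using Suc.prems by (intro Suc.IH) auto
  have sub: "reach G t p k \<inter> C \<subseteq> reach G t p (Suc k) \<inter> C" using reach_mono[of G t p k] by blast
  show ?case
  proof (cases "C \<subseteq> reach G t p k")
    case True
    then have "C \<subseteq> reach G t p (Suc k) \<inter> C" using reach_mono[of G t p k] by blast
    then have "card C \<le> card (reach G t p (Suc k) \<inter> C)" by (simp add: card_mono)
    then show ?thesis by simp
  next
    case False
    then obtain b where b: "b \<in> C" "b \<notin> reach G t p k" by blast
    have tk: "t + k \<in> {r..s}" using Suc.prems by auto
    have sccp: "scc_of (G (t+k)) p = C" using vs pC tk unfolding vertex_stable_scc_def by auto
    have "b \<in> scc_of (G (t+k)) p" using b(1) sccp by simp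
    then have pb: "(p, b) \<in> (G (t+k))\<^sup>*" "(b, p) \<in> (G (t+k))\<^sup>*" unfolding scc_of_def by auto
    have pR: "p \<in> reach G t p k \<inter> C"
    proof -
      have "p \<in> reach G t p k" unfolding reach_def by (rule CollectI, rule exI[of _ "\<lambda>_. p"]) (auto simp: influences_def)
      then show ?thesis using pC by auto
    qed
    obtain u v where uv: "(u, v) \<in> G (t+k)" "u \<in> reach G t p k \<inter> C" "v \<notin> reach G t p k \<inter> C"
      "(p, u) \<in> (G (t+k))\<^sup>*" "(v, b) \<in> (G (t+k))\<^sup>*"
      using edge_out[OF pb(1) pR] b by blast
    have "(v, p) \<in> (G (t+k))\<^sup>*" using uv(5) pb(2) by (meson rtrancl_trans)
    moreover have "(p, v) \<in> (G (t+k))\<^sup>*" using uv(1,4) by (meson rtrancl.rtrancl_into_rtrancl)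
    ultimately have "v \<in> scc_of (G (t+k)) p" unfolding scc_of_def by blast
    then have vC: "v \<in> C" using sccp by simp
    have "v \<in> reach G t p (Suc k)" using reach_ext[of u G t p k v] uv by (auto simp: influences_def)
    then have "insert v (reach G t p k \<inter> C) \<subseteq> reach G t p (Suc k) \<inter> C" using sub vC by blast
    then have "card (insert v (reach G t p k \<inter> C)) \<le> card (reach G t p (Suc k) \<inter> C)" by (simp add: card_mono)
    moreover have "card (insert v (reach G t p k \<inter> C)) = Suc (card (reach G t p k \<inter> C))"
      using uv(3) by simp
    ultimately show ?thesis using IH by simp
  qed
qed

lemma diam_le:
  fixes G :: "nat \<Rightarrow> ('p::finite \<times> 'p) set"
  assumes vs: "vertex_stable_scc G r s C" and c2: "card C \<ge> 2"
    and rounds: "\<forall>i<card C - 1. x + i \<in> {r..s}"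
  shows "causal_diam_at G x C \<le> enat (card C - 1)"
proof -
  have fin: "finite {causal_dist G x p q | p q. p \<in> C \<and> q \<in> C}"
  proof -
    have "{causal_dist G x p q | p q. p \<in> C \<and> q \<in> C} = (\<lambda>(p,q). causal_dist G x p q) ` (C \<times> C)" by auto
    then show ?thesis by simp
  qed
  obtain c where "c \<in> C" using c2 by (metis all_not_in_conv card.empty not_numeral_le_zero)
  then have ne: "{causal_dist G x p q | p q. p \<in> C \<and> q \<in> C} \<noteq> {}" by blast
  have "causal_dist G x p q \<le> enat (card C - 1)" if pq: "p \<in> C" "q \<in> C" for p q
  proof -
    have "min (card C) (card C - 1 + 1) \<le> card (reach G x p (card C - 1) \<inter> C)"
      using grow[OF vs pq(1)] rounds by blast
    then have "card C \<le> card (reach G x p (card C - 1) \<inter> C)" using c2 by simp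
    then have "reach G x p (card C - 1) \<inter> C = C"
      by (intro card_seteq) auto
    then have "C \<subseteq> reach G x p (card C - 1)" by blast
    then have "q \<in> reach G x p (card C - 1)" using pq by blast
    then have ch: "causal_chain G x p q (card C - 1)" using c2 unfolding reach_def causal_chain_def by auto
    then have "(LEAST k. causal_chain G x p q k) \<le> card C - 1" by (rule Least_le)
    then show ?thesis using ch unfolding causal_dist_def by auto
  qed
  then show ?thesis unfolding causal_diam_at_def using fin ne by (auto simp: Max_le_iff)
qed

theorem lemma2:
  fixes G :: "nat \<Rightarrow> ('p::finite \<times> 'p) set"
    and r s :: nat and C :: "'p set"
  assumes "card (UNIV :: 'p set) \<ge> 2"
    and "\<forall>t p. (p, p) \<notin> G t"
    and "r \<ge> 1"
    and "s \<ge> r"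
    and "vertex_stable_scc G r s C"
    and "card C \<ge> 2"
    and "s \<ge> r + card C - 2"
  shows "causal_diam G r s C \<le> enat (card C - 1)"
proof -
  let ?n = "card C"
  define S where "S = {causal_diam_at G x C | x. x \<in> {r..s} \<and> enat x + causal_diam_at G x C \<le> enat s + 1}"
  have rr: "\<forall>i<?n - 1. r + i \<in> {r..s}" using assms(6,7) by auto
  have Dr: "causal_diam_at G r C \<le> enat (?n - 1)"
    using diam_le[OF assms(5) assms(6) rr] .
  have "enat r + causal_diam_at G r C \<le> enat r + enat (?n - 1)" using Dr by (rule add_left_mono)
  also have "\<dots> \<le> enat s + 1" using assms(6,7) by (simp add: one_enat_def)
  finally have "causal_diam_at G r C \<in> S" unfolding S_def using assms(4) by auto
  then have ne: "S \<noteq> {}" by blast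
  have finS: "finite S"
  proof -
    have "S \<subseteq> (\<lambda>x. causal_diam_at G x C) ` {r..s}" unfolding S_def by auto
    then show ?thesis using finite_subset by blast
  qed
  have all: "d \<le> enat (?n - 1)" if dS: "d \<in> S" for d
  proof -
    obtain x where x: "d = causal_diam_at G x C" "x \<in> {r..s}" "enat x + causal_diam_at G x C \<le> enat s + 1"
      using dS unfolding S_def by blast
    show ?thesis
    proof (cases "x + ?n - 2 \<le> s")
      case True
      then have "\<forall>i<?n - 1. x + i \<in> {r..s}" using x(2) by auto
      then show ?thesis using diam_le[OF assms(5) assms(6)] x(1) by auto
    next
      case False
      then have lt: "s + 1 < x + (?n - 1)" using assms(6) by linarith
      show ?thesis
      proof (cases "causal_diam_at G x C")
        case (enat m)
        then have "x + m \<le> s + 1" using x(3) by (simp add: one_enat_def)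
        then show ?thesis using lt enat x(1) by simp
      next
        case infinity then show ?thesis using x(3) by (simp add: one_enat_def)
      qed
    qed
  qed
  show ?thesis unfolding causal_diam_def Let_def S_def[symmetric] using ne finS all by auto
qed

end
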